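(* Let $n\ge 1$ and $k\ge 1$ be integers with $n\ge 2k$. Then: 1. For every $0\le i\le n-2k$, the list $\mathcal{F}(\alpha_{n,k}^i)$ contains every word of $F_n(2,k)$ (so it is a homogeneous Gray code for $F_n(2,k)$), it is suffix partitioned, and its last word is $\gamma_{n,k}$. 2. The list $\mathcal{F}(\gamma_{n,k})$ contains every word of $F_n(2,k)$, it is suffix partitioned, and its last word is $\alpha_{n,k}^0=1(01)^{k-1}0^{n-2k+1}$ if $k$ is even, and $\alpha_{n,k}^{n-2k}=0^{n-2k}1(01)^{k-1}0$ if $k$ is odd.
   Context: The weight of a binary word is its number of 1's. $F_n(2,k)$ is the set of binary words of length $n$ and weight $k$ containing no two consecutive 1's. For $0\le i\le n-2k+1$ let $\alpha_{n,k}^i=0^i1(01)^{k-1}0^{n-2k+1-i}$, and let $\gamma_{n,k}=0^{n-2k}(01)^k$. A homogeneous transposition of a binary word exchanges a 1 and a 0 such that no 1 occurs strictly between the two exchanged positions. For a set $S$ of binary words of the same length and weight and $\alpha\in S$, the list obtained by applying the greedy algorithm for $S$ to $\alpha$ is built as follows: start with the list $(\alpha)$; repeatedly, for the last word $w$ of the current list, among all words obtainable from $w$ by one homogeneous transposition that lie in $S$ and do not already occur in the list, choose the one obtained by transposing the leftmost possible 1 with (among transpositions of that 1) the leftmost possible 0, and append it; stop when no such word exists. $\mathcal{F}(\alpha)$ denotes the list obtained by applying the greedy algorithm for $F_n(2,k)$ to $\alpha\in F_n(2,k)$. A list is suffix partitioned if, for every word $s$, the words of the list having suffix $s$ occupy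 consecutive positions. *)

theory Defs
  imports Main "HOL-Library.Sublist"
begin

definition weight :: "nat list \<Rightarrow> nat" where
  "weight w = count_list w 1"

definition Fn :: "nat \<Rightarrow> nat \<Rightarrow> nat list set" where
  "Fn n k = {w. length w = n \<and> set w \<subseteq> {0,1} \<and> weight w = k \<and>
               (\<forall>m. Suc m < length w \<longrightarrow> \<not> (w ! m = 1 \<and> w ! Suc m = 1))}"

definition alpha :: "nat \<Rightarrow> nat \<Rightarrow> nat \<Rightarrow> nat list" where
  "alpha n k i = replicate i 0 @ [1] @ concat (replicate (k - 1) [0,1])
                 @ replicate (n - 2*k + 1 - i) 0"

definition gamma :: "nat \<Rightarrow> nat \<Rightarrow> nat list" where
  "gamma n k = replicate (n - 2*k) 0 @ concat (replicate k [0,1])"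

definition homog_trans_ok :: "nat list \<Rightarrow> nat \<Rightarrow> nat \<Rightarrow> bool" where
  "homog_trans_ok w i j \<longleftrightarrow> i < length w \<and> j < length w \<and> w ! i = 1 \<and> w ! j = 0 \<and>
     (\<forall>m. min i j < m \<and> m < max i j \<longrightarrow> w ! m \<noteq> 1)"

definition transpose_at :: "nat list \<Rightarrow> nat \<Rightarrow> nat \<Rightarrow> nat list" where
  "transpose_at w i j = w[i := w ! j, j := w ! i]"

definition greedy_cand :: "nat list set \<Rightarrow> nat list list \<Rightarrow> nat \<Rightarrow> nat \<Rightarrow> bool" where
  "greedy_cand S L i j \<longleftrightarrow> homog_trans_ok (last L) i j \<and>
     transpose_at (last L) i j \<in> S \<and> transpose_at (last L) i j \<notin> set L"

text \<open>Next word chosen by the greedy rule: leftmost 1, then leftmost 0.\<close>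
definition greedy_next :: "nat list set \<Rightarrow> nat list list \<Rightarrow> nat list option" where
  "greedy_next S L =
     (if \<exists>i j. greedy_cand S L i j then
        (let i0 = (LEAST i. \<exists>j. greedy_cand S L i j);
             j0 = (LEAST j. greedy_cand S L i0 j)
         in Some (transpose_at (last L) i0 j0))
      else None)"

definition greedy_step :: "nat list set \<Rightarrow> nat list list \<Rightarrow> nat list list" where
  "greedy_step S L = (case greedy_next S L of None \<Rightarrow> L | Some w \<Rightarrow> L @ [w])"

text \<open>The greedy list: each step appends a new word of S, so after card S steps the
  process has stopped (once stopped it stays unchanged).\<close>
definition greedy :: "nat list set \<Rightarrow> nat list \<Rightarrow> nat list list" where
  "greedy S a = (greedy_step S ^^ card S) [a]"

definition calF :: "nat \<Rightarrow> nat \<Rightarrow> nat list \<Rightarrow> nat list list" where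
  "calF n k a = greedy (Fn n k) a"

definition suffix_partitioned :: "nat list list \<Rightarrow> bool" where
  "suffix_partitioned L \<longleftrightarrow> (\<forall>s a b c. a \<le> b \<and> b \<le> c \<and> c < length L \<and>
      suffix s (L ! a) \<and> suffix s (L ! c) \<longrightarrow> suffix s (L ! b))"

end

theory Submission
  imports Defs
begin


definition no11 :: "nat list \<Rightarrow> bool" where
 "no11 w \<longleftrightarrow> (\<forall>m. Suc m < length w \<longrightarrow> \<not> (w!m = 1 \<and> w!Suc m = 1))"

lemma Fn_iff: "w \<in> Fn n k \<longleftrightarrow> length w = n \<and> set w \<subseteq> {0,1} \<and> count_list w 1 = k \<and> no11 w"
  by (simp add: Fn_def weight_def no11_def)

lemma no11_Nil[simp]: "no11 []" by (simp add: no11_def)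

lemma no11_Cons: "no11 (x#xs) \<longleftrightarrow> no11 xs \<and> \<not>(xs \<noteq> [] \<and> x = 1 \<and> hd xs = 1)"
proof
  assume a: "no11 (x#xs)"
  have "no11 xs" unfolding no11_def
  proof (intro allI impI)
    fix m assume "Suc m < length xs"
    with a show "\<not> (xs!m = 1 \<and> xs!Suc m = 1)" unfolding no11_def
      by (metis Suc_less_eq length_Cons nth_Cons_Suc)
  qed
  moreover have "\<not>(xs \<noteq> [] \<and> x = 1 \<and> hd xs = 1)"
    using a unfolding no11_def by (cases xs) auto
  ultimately show "no11 xs \<and> \<not>(xs \<noteq> [] \<and> x = 1 \<and> hd xs = 1)" by blast
next
  assume a: "no11 xs \<and> \<not>(xs \<noteq> [] \<and> x = 1 \<and> hd xs = 1)"
  show "no11 (x#xs)" unfolding no11_def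
  proof (intro allI impI)
    fix m assume m: "Suc m < length (x#xs)"
    show "\<not> ((x#xs)!m = 1 \<and> (x#xs)!Suc m = 1)"
    proof (cases m)
      case 0 then show ?thesis using a m by (cases xs) auto
    next
      case (Suc m') then show ?thesis using a m unfolding no11_def by auto
    qed
  qed
qed

lemma no11_append: "no11 (a@b) \<longleftrightarrow> no11 a \<and> no11 b \<and> \<not>(a \<noteq> [] \<and> b \<noteq> [] \<and> last a = 1 \<and> hd b = 1)"
  by (induction a) (auto simp: no11_Cons)

lemma no11_single[simp]: "no11 [x]" by (simp add: no11_def)

definition D :: "nat \<Rightarrow> nat list" where "D a = concat (replicate a [0,1])"

lemma D_0[simp]: "D 0 = []" by (simp add: D_def)
lemma D_Suc: "D (Suc a) = [0,1] @ D a" by (simp add: D_def)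
lemma D_Suc': "D (Suc a) = D a @ [0,1]"
  by (induction a) (simp_all add: D_def)
lemma D_len[simp]: "length (D a) = 2*a" by (induction a) (simp_all add: D_Suc)
lemma D_set: "set (D a) \<subseteq> {0,1}" by (induction a) (auto simp: D_Suc)
lemma D_count[simp]: "count_list (D a) 1 = a" by (induction a) (simp_all add: D_Suc)
lemma D_hd: "D a \<noteq> [] \<Longrightarrow> hd (D a) = 0" by (cases a) (simp_all add: D_Suc)
lemma D_last: "D a \<noteq> [] \<Longrightarrow> last (D a) = 1" by (cases a) (simp_all add: D_Suc')
lemma D_no11: "no11 (D a)" by (induction a) (auto simp: D_Suc no11_Cons D_hd)

lemma Z_no11: "no11 (replicate r (0::nat))" by (induction r) (auto simp: no11_Cons)
lemma Z_count[simp]: "count_list (replicate r (0::nat)) 1 = 0" by (induction r) auto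


lemma set01_append: "set (a@b) \<subseteq> {0,1} \<longleftrightarrow> set a \<subseteq> {0,1} \<and> set b \<subseteq> {0::nat,1}" by auto

lemma Fn_snoc0: "v@[0] \<in> Fn (Suc m) k \<longleftrightarrow> v \<in> Fn m k"
  by (auto simp: Fn_iff no11_append)

lemma Fn_snoc01: "v@[0,1] \<in> Fn (Suc (Suc m)) k \<longleftrightarrow> 0 < k \<and> v \<in> Fn m (k-1)"
  by (auto simp: Fn_iff no11_append no11_Cons)

lemma Fn_decomp:
  assumes "w \<in> Fn n k" "2 \<le> n"
  shows "(\<exists>v. w = v@[0] \<and> v \<in> Fn (n-1) k) \<or> (\<exists>v. w = v@[0,1] \<and> v \<in> Fn (n-2) (k-1) \<and> 0 < k)"
proof -
  have len: "length w = n" using assms by (simp add: Fn_iff)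
  have "w \<noteq> []" using len assms(2) by auto
  then obtain u y where u: "w = u@[y]" by (metis append_butlast_last_id)
  have y: "y \<in> {0,1}" using assms(1) u by (auto simp: Fn_iff)
  show ?thesis
  proof (cases "y = 0")
    case True
    then have "u@[0] \<in> Fn (Suc (n-1)) k" using assms u by simp
    then show ?thesis using u True Fn_snoc0 by blast
  next
    case False
    then have y1: "y = 1" using y by auto
    have "length u = n - 1" using len u by simp
    then have "u \<noteq> []" using assms(2) by auto
    then obtain v z where v: "u = v@[z]" by (metis append_butlast_last_id)
    have "z \<in> {0,1}" using assms(1) u v by (auto simp: Fn_iff)
    moreover have "z \<noteq> 1" using assms(1) u v y1 by (auto simp: Fn_iff no11_append no11_Cons)
    ultimately have z: "z = 0" by auto
    have w: "w = v@[0,1]" using u v y1 z by simp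
    have "Suc (Suc (n-2)) = n" using assms(2) by simp
    then have "v@[0,1] \<in> Fn (Suc (Suc (n-2))) k" using assms w by simp
    then show ?thesis using w Fn_snoc01 by blast
  qed
qed

lemma Fn_last1:
  assumes "w \<in> Fn n k" "2 \<le> n" "w ! (n-1) = 1"
  shows "\<exists>v. w = v@[0,1] \<and> v \<in> Fn (n-2) (k-1)"
  using Fn_decomp[OF assms(1,2)] assms(3) by (auto simp: Fn_iff nth_append)

lemma Fn_last0:
  assumes "w \<in> Fn n k" "1 \<le> n" "w ! (n-1) = 0"
  shows "\<exists>v. w = v@[0] \<and> v \<in> Fn (n-1) k"
proof -
  have len: "length w = n" using assms by (simp add: Fn_iff)
  then have w: "w = butlast w @ [0]" using assms
    by (metis append_butlast_last_id last_conv_nth le_zero_eq list.size(3) one_neq_zero)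
  have "butlast w @ [0] \<in> Fn (Suc (n-1)) k" using assms w by simp
  then show ?thesis using w Fn_snoc0 by blast
qed

lemma weight_bound_aux: "no11 w \<Longrightarrow> 2 * count_list w 1 \<le> length w + 1"
proof (induction w rule: induct_list012)
  case (3 x y zs)
  show ?case
  proof (cases "x = 1")
    case True
    then have "y \<noteq> 1" using 3 by (simp add: no11_Cons)
    moreover have "no11 zs" using 3 by (simp add: no11_Cons)
    ultimately show ?thesis using 3 True by simp
  next
    case False
    then show ?thesis using 3 by (simp add: no11_Cons)
  qed
qed auto

lemma weight_bound: "w \<in> Fn n k \<Longrightarrow> 2*k \<le> n + 1"
  using weight_bound_aux by (auto simp: Fn_iff)

lemma Fn_zero: "Fn m 0 \<subseteq> {replicate m 0}"
proof
  fix w assume "w \<in> Fn m 0"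
  then have "length w = m" "set w \<subseteq> {0,1}" "1 \<notin> set w" by (auto simp: Fn_iff count_list_0_iff)
  then have "set w \<subseteq> {0}" by auto
  then show "w \<in> {replicate m 0}" using \<open>length w = m\<close>
    using replicate_eqI[of w m 0] by auto
qed

lemma Fn_tight: "Fn (2*k+1) (Suc k) \<subseteq> {[1] @ D k}"
proof (induction k)
  case 0
  show ?case
  proof
    fix w assume "w \<in> Fn (2*0+1) (Suc 0)"
    then have "length w = 1" "set w \<subseteq> {0,1}" "count_list w 1 = 1" by (auto simp: Fn_iff)
    then show "w \<in> {[1] @ D 0}" by (cases w) (auto split: if_splits)
  qed
next
  case (Suc k)
  show ?case
  proof
    fix w assume w: "w \<in> Fn (2*Suc k+1) (Suc (Suc k))"
    have "2 \<le> 2*Suc k+1" by simp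
    from Fn_decomp[OF w this] show "w \<in> {[1] @ D (Suc k)}"
    proof (elim disjE exE conjE)
      fix v assume "w = v@[0]" "v \<in> Fn (2 * Suc k + 1 - 1) (Suc (Suc k))"
      then have "2 * Suc (Suc k) \<le> 2 * Suc k + 1 - 1 + 1" using weight_bound by blast
      then show ?thesis by simp
    next
      fix v assume "w = v@[0,1]" "v \<in> Fn (2 * Suc k + 1 - 2) (Suc (Suc k) - 1)"
      then have "v = [1] @ D k" using Suc by auto
      then show ?thesis using \<open>w = v@[0,1]\<close> by (simp add: D_Suc')
    qed
  qed
qed

lemma finite_Fn: "finite (Fn n k)"
proof -
  have "Fn n k \<subseteq> {xs. set xs \<subseteq> {0,1} \<and> length xs = n}" by (auto simp: Fn_iff)
  moreover have "finite {xs. set xs \<subseteq> {0::nat,1} \<and> length xs = n}"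
    by (rule finite_lists_length_eq) simp
  ultimately show ?thesis by (rule finite_subset)
qed


lemma greedy_next_SomeE:
  assumes "greedy_next S L = Some w"
  shows "\<exists>i j. greedy_cand S L i j \<and> w = transpose_at (last L) i j \<and>
           (\<forall>i' j'. greedy_cand S L i' j' \<longrightarrow> i < i' \<or> (i = i' \<and> j \<le> j'))"
proof -
  have ex: "\<exists>i j. greedy_cand S L i j"
    using assms unfolding greedy_next_def by (auto split: if_splits)
  define i0 where "i0 = (LEAST i. \<exists>j. greedy_cand S L i j)"
  define j0 where "j0 = (LEAST j. greedy_cand S L i0 j)"
  have w: "w = transpose_at (last L) i0 j0"
    using assms ex unfolding greedy_next_def i0_def j0_def by (simp add: Let_def)
  have c1: "\<exists>j. greedy_cand S L i0 j" unfolding i0_def using ex by (rule LeastI_ex)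
  have c2: "greedy_cand S L i0 j0" unfolding j0_def using c1 by (rule LeastI_ex)
  have m: "i0 < i' \<or> (i0 = i' \<and> j0 \<le> j')" if "greedy_cand S L i' j'" for i' j'
  proof -
    have "i0 \<le> i'" unfolding i0_def using that by (blast intro: Least_le)
    moreover have "i0 = i' \<Longrightarrow> j0 \<le> j'" unfolding j0_def using that by (blast intro: Least_le)
    ultimately show ?thesis by linarith
  qed
  show ?thesis using w c2 m by blast
qed

lemma greedy_next_eqI:
  assumes c: "greedy_cand S L i j"
    and m: "\<And>i' j'. greedy_cand S L i' j' \<Longrightarrow> i < i' \<or> (i = i' \<and> j \<le> j')"
  shows "greedy_next S L = Some (transpose_at (last L) i j)"
proof -
  have ex: "\<exists>i j. greedy_cand S L i j" using c by blast
  have i0: "(LEAST i. \<exists>j. greedy_cand S L i j) = i"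
  proof (rule Least_equality)
    show "\<exists>j. greedy_cand S L i j" using c by blast
    fix y assume "\<exists>j. greedy_cand S L y j"
    then show "i \<le> y" using m by force
  qed
  have j0: "(LEAST j'. greedy_cand S L i j') = j"
  proof (rule Least_equality)
    show "greedy_cand S L i j" using c .
    fix y assume "greedy_cand S L i y"
    then show "j \<le> y" using m by force
  qed
  show ?thesis unfolding greedy_next_def using ex i0 j0 by (simp add: Let_def)
qed

lemma greedy_next_NoneI: "(\<And>i j. \<not> greedy_cand S L i j) \<Longrightarrow> greedy_next S L = None"
  unfolding greedy_next_def by auto

lemma greedy_next_NoneD: "greedy_next S L = None \<Longrightarrow> \<not> greedy_cand S L i j"
  unfolding greedy_next_def by (auto simp: Let_def split: if_splits)

lemma greedy_next_Some_props: "greedy_next S L = Some w \<Longrightarrow> w \<in> S \<and> w \<notin> set L"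
  using greedy_next_SomeE[of S L w] unfolding greedy_cand_def by auto

inductive grun :: "nat list set \<Rightarrow> nat list list \<Rightarrow> nat list list \<Rightarrow> bool" for S where
  stop: "greedy_next S L = None \<Longrightarrow> grun S L L"
| step: "greedy_next S L = Some w \<Longrightarrow> grun S (L@[w]) L' \<Longrightarrow> grun S L L'"

lemma grun_props: "grun S L L' \<Longrightarrow> distinct L \<Longrightarrow>
   distinct L' \<and> set L' \<subseteq> set L \<union> S \<and> (\<exists>M. L' = L @ M)"
proof (induction rule: grun.induct)
  case (stop L) then show ?case by simp
next
  case (step L w L')
  have "w \<in> S" "w \<notin> set L" using greedy_next_Some_props[OF step.hyps(1)] by auto
  then have "distinct (L@[w])" using step.prems by simp
  then show ?case using step.IH \<open>w \<in> S\<close> by force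
qed

lemma grun_prefix: "grun S L L' \<Longrightarrow> \<exists>M. L' = L @ M"
  by (induction rule: grun.induct) auto

lemma funpow_fix: "f x = x \<Longrightarrow> (f ^^ m) x = x"
  by (induction m) auto

lemma grun_funpow: "grun S L L' \<Longrightarrow> length L' \<le> length L + m \<Longrightarrow> (greedy_step S ^^ m) L = L'"
proof (induction arbitrary: m rule: grun.induct)
  case (stop L)
  then show ?case by (intro funpow_fix) (simp add: greedy_step_def)
next
  case (step L w L')
  have "length (L@[w]) \<le> length L'"
    using grun_prefix[OF step.hyps(2)] by (metis le_add1 length_append)
  then obtain m' where m: "m = Suc m'" using step.prems by (cases m) auto
  have gs: "greedy_step S L = L@[w]" using step.hyps(1) by (simp add: greedy_step_def)
  have "(greedy_step S ^^ m) L = (greedy_step S ^^ m') (greedy_step S L)"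
    unfolding m funpow_Suc_right by simp
  also have "\<dots> = L'" using gs step.IH[of m'] step.prems m by simp
  finally show ?case .
qed

lemma grun_greedy:
  assumes "grun S [a] L" "finite S"
  shows "greedy S a = L"
proof -
  from grun_props[OF assms(1)] obtain M where d: "distinct L" "set L \<subseteq> insert a S" "L = a # M"
    by auto
  have "set M \<subseteq> S" using d by auto
  then have "card (set M) \<le> card S" using assms(2) by (simp add: card_mono)
  moreover have "card (set M) = length M" using d by (simp add: distinct_card)
  ultimately have "length L \<le> length [a] + card S" using d by simp
  then show ?thesis unfolding greedy_def using grun_funpow[OF assms(1)] by blast
qed


lemma homog_app:
  assumes "i < length u" "j < length u"
  shows "homog_trans_ok (u@s) i j \<longleftrightarrow> homog_trans_ok u i j"
proof -
  have "(\<forall>m. min i j < m \<and> m < max i j \<longrightarrow> (u@s) ! m \<noteq> 1) \<longleftrightarrow>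
        (\<forall>m. min i j < m \<and> m < max i j \<longrightarrow> u ! m \<noteq> 1)"
    using assms by (auto simp: nth_append)
  then show ?thesis using assms unfolding homog_trans_ok_def by (simp add: nth_append)
qed

lemma transpose_app:
  assumes "i < length u" "j < length u"
  shows "transpose_at (u@s) i j = transpose_at u i j @ s"
  using assms by (simp add: transpose_at_def nth_append list_update_append)

lemma length_transpose[simp]: "length (transpose_at u i j) = length u"
  by (simp add: transpose_at_def)

lemma cand_prefix:
  assumes Q: "Q \<noteq> []" and ij: "i < length (last Q)" "j < length (last Q)"
    and nohist: "\<forall>h\<in>set H. \<forall>t. h \<noteq> t@s"
    and mem: "\<forall>t. t@s \<in> S \<longleftrightarrow> t \<in> S'"
  shows "greedy_cand S (H @ map (\<lambda>v. v@s) Q) i j \<longleftrightarrow> greedy_cand S' Q i j"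
proof -
  let ?u = "last Q"
  have l: "last (H @ map (\<lambda>v. v@s) Q) = ?u @ s" using Q by (simp add: last_map)
  have vis: "t@s \<in> set (H @ map (\<lambda>v. v@s) Q) \<longleftrightarrow> t \<in> set Q" for t
    using nohist by auto
  show ?thesis unfolding greedy_cand_def l
    using homog_app[OF ij] transpose_app[OF ij] mem vis by simp
qed

definition lexafter :: "nat list set \<Rightarrow> nat list \<Rightarrow> nat list \<Rightarrow> bool" where
  "lexafter S s u \<longleftrightarrow> (\<forall>i j. homog_trans_ok (u@s) i j \<and> transpose_at (u@s) i j \<in> S \<and>
       \<not>(i < length u \<and> j < length u) \<longrightarrow>
       (\<forall>i' j'. i' < length u \<and> j' < length u \<and> homog_trans_ok (u@s) i' j' \<longrightarrow> i' < i \<or> (i' = i \<and> j' < j)))"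

lemma cand_homog: "greedy_cand S L i j \<Longrightarrow> homog_trans_ok (last L) i j"
  by (simp add: greedy_cand_def)

lemma homog_lt: "homog_trans_ok w i j \<Longrightarrow> i < length w \<and> j < length w"
  by (simp add: homog_trans_ok_def)

lemma step_sim:
  assumes Q: "Q \<noteq> []" and g: "greedy_next S' Q = Some w"
    and nohist: "\<forall>h\<in>set H. \<forall>t. h \<noteq> t@s"
    and mem: "\<forall>t. t@s \<in> S \<longleftrightarrow> t \<in> S'"
    and lex: "\<forall>u. lexafter S s u"
  shows "greedy_next S (H @ map (\<lambda>v. v@s) Q) = Some (w@s)"
proof -
  let ?L = "H @ map (\<lambda>v. v@s) Q"
  let ?u = "last Q"
  have l: "last ?L = ?u @ s" using Q by (simp add: last_map)
  obtain i j where c: "greedy_cand S' Q i j" and w: "w = transpose_at ?u i j"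
    and mn: "\<forall>i' j'. greedy_cand S' Q i' j' \<longrightarrow> i < i' \<or> (i = i' \<and> j \<le> j')"
    using greedy_next_SomeE[OF g] by blast
  have ij: "i < length ?u" "j < length ?u" using homog_lt[OF cand_homog[OF c]] by auto
  have c2: "greedy_cand S ?L i j" using cand_prefix[OF Q ij nohist mem] c by simp
  have hij: "homog_trans_ok (?u@s) i j" using c2 l by (simp add: greedy_cand_def)
  have "greedy_next S ?L = Some (transpose_at (last ?L) i j)"
  proof (rule greedy_next_eqI[OF c2])
    fix i' j' assume c': "greedy_cand S ?L i' j'"
    show "i < i' \<or> (i = i' \<and> j \<le> j')"
    proof (cases "i' < length ?u \<and> j' < length ?u")
      case True
      then have "greedy_cand S' Q i' j'" using cand_prefix[OF Q _ _ nohist mem] c' by blast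
      then show ?thesis using mn by blast
    next
      case False
      have "homog_trans_ok (?u@s) i' j'" "transpose_at (?u@s) i' j' \<in> S"
        using c' l by (auto simp: greedy_cand_def)
      then show ?thesis using lex False ij hij unfolding lexafter_def by force
    qed
  qed
  then show ?thesis using l w transpose_app[OF ij] by simp
qed

lemma sim:
  assumes "grun S' P P'" "P \<noteq> []"
    and nohist: "\<forall>h\<in>set H. \<forall>t. h \<noteq> t@s"
    and mem: "\<forall>t. t@s \<in> S \<longleftrightarrow> t \<in> S'"
    and lex: "\<forall>u. lexafter S s u"
    and "grun S (H @ map (\<lambda>v. v@s) P') R"
  shows "grun S (H @ map (\<lambda>v. v@s) P) R"
  using assms(1,2,6)
proof (induction rule: grun.induct)
  case (stop L) then show ?case by simp
next
  case (step L w L')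
  have "greedy_next S (H @ map (\<lambda>v. v@s) L) = Some (w@s)"
    using step_sim[OF step.prems(1) step.hyps(1) nohist mem lex] .
  moreover have "grun S (H @ map (\<lambda>v. v@s) (L@[w])) R" using step.IH step.prems by simp
  ultimately show ?case by (simp add: grun.step)
qed


lemma extra0:
  assumes h: "homog_trans_ok (u@[0]) i j" and nb: "\<not>(i < length u \<and> j < length u)"
  shows "i < length u \<and> j = length u \<and> (\<forall>p. i < p \<and> p < length u \<longrightarrow> u!p \<noteq> 1)"
proof -
  let ?m = "length u"
  have lt: "i < Suc ?m" "j < Suc ?m" "(u@[0])!i = 1" "(u@[0])!j = 0"
    using h by (auto simp: homog_trans_ok_def)
  have "i \<noteq> ?m" using lt by auto
  then have i: "i < ?m" using lt by auto
  then have j: "j = ?m" using nb lt by auto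
  have "\<forall>p. i < p \<and> p < ?m \<longrightarrow> u!p \<noteq> 1"
  proof (intro allI impI)
    fix p assume p: "i < p \<and> p < ?m"
    then have "(u@[0])!p \<noteq> 1" using h j unfolding homog_trans_ok_def by auto
    then show "u!p \<noteq> 1" using p by (simp add: nth_append)
  qed
  then show ?thesis using i j by blast
qed

lemma lexafter0: "lexafter S [0] u"
  unfolding lexafter_def
proof (intro allI impI)
  fix i j i' j'
  assume a: "homog_trans_ok (u @ [0]) i j \<and> transpose_at (u @ [0]) i j \<in> S \<and> \<not> (i < length u \<and> j < length u)"
    and b: "i' < length u \<and> j' < length u \<and> homog_trans_ok (u @ [0]) i' j'"
  have e: "i < length u" "j = length u" "\<forall>p. i < p \<and> p < length u \<longrightarrow> u!p \<noteq> 1"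
    using extra0[of u i j] a by auto
  have "(u@[0])!i' = 1" using b by (simp add: homog_trans_ok_def)
  then have "u!i' = 1" using b by (simp add: nth_append)
  then have "\<not> i < i'" using e b by auto
  then show "i' < i \<or> i' = i \<and> j' < j" using e b by auto
qed

lemma extra01:
  assumes h: "homog_trans_ok (u@[0,1]) i j" and inS: "transpose_at (u@[0,1]) i j \<in> Fn n k"
    and nb: "\<not>(i < length u \<and> j < length u)"
  shows "i = Suc (length u)"
proof (rule ccontr)
  assume ne: "i \<noteq> Suc (length u)"
  let ?m = "length u"
  let ?w = "u@[0,1]"
  have lt: "i < Suc (Suc ?m)" "j < Suc (Suc ?m)" "?w!i = 1" "?w!j = 0"
    using h by (auto simp: homog_trans_ok_def)
  have "i \<noteq> ?m" using lt by (auto simp: nth_append)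
  then have i: "i < ?m" using lt ne by auto
  have "j \<noteq> Suc ?m" using lt by (auto simp: nth_append)
  then have j: "j = ?m" using nb lt i by auto
  let ?t = "transpose_at ?w i j"
  have "?t ! ?m = 1" "?t ! Suc ?m = 1" "length ?t = Suc (Suc ?m)"
    using i j lt by (auto simp: transpose_at_def nth_list_update nth_append)
  then have "\<not> no11 ?t" unfolding no11_def by auto
  then show False using inS by (simp add: Fn_iff)
qed

lemma lexafter01: "lexafter (Fn n k) [0,1] u"
  unfolding lexafter_def
proof (intro allI impI)
  fix i j i' j'
  assume a: "homog_trans_ok (u @ [0,1]) i j \<and> transpose_at (u @ [0,1]) i j \<in> Fn n k \<and> \<not> (i < length u \<and> j < length u)"
    and b: "i' < length u \<and> j' < length u \<and> homog_trans_ok (u @ [0,1]) i' j'"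
  have "i = Suc (length u)" using extra01[of u i j n k] a by blast
  then show "i' < i \<or> i' = i \<and> j' < j" using b by auto
qed

lemma rep_upd: "(replicate (Suc r) a)[r := b] = replicate r a @ [b]"
  by (induction r) auto

lemma Cons_rep_app: "a # replicate r a @ ys = replicate r a @ a # ys"
  by (induction r) auto

lemma nth_Cons_rep[simp]: "q \<le> r \<Longrightarrow> (a # replicate r a) ! q = a"
  by (cases q) auto

lemma T1:
  assumes Q: "Q \<noteq> []" and u: "last Q = x @ [1] @ replicate r 0"
    and none: "greedy_next S' Q = None"
    and mem: "\<forall>t. t@[0] \<in> S \<longleftrightarrow> t \<in> S'"
    and res: "(x @ replicate r 0) @ [0,1] \<in> S"
  shows "greedy_next S (map (\<lambda>v. v@[0]) Q) = Some ((x @ replicate r 0) @ [0,1])"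
proof -
  let ?u = "last Q"
  let ?L = "[] @ map (\<lambda>v. v@[0]) Q"
  let ?m = "length ?u"
  have m: "?m = length x + 1 + r" using u by simp
  have l: "last ?L = ?u @ [0]" using Q by (simp add: last_map)
  have w: "?u @ [0] = x @ 1 # replicate (Suc r) 0" using u by (simp add: replicate_append_same)
  have nohist: "\<forall>h\<in>set ([]::nat list list). \<forall>t. h \<noteq> t@[0]" by simp
  have hom: "homog_trans_ok (?u@[0]) (length x) ?m"
    unfolding homog_trans_ok_def w using m by (auto simp: nth_append)
  have tr: "transpose_at (?u@[0]) (length x) ?m = (x @ replicate r 0) @ [0,1]"
  proof -
    have "transpose_at (?u@[0]) (length x) ?m = (x @ 1 # replicate (Suc r) 0)[length x := 0, length x + 1 + r := 1]"
      unfolding transpose_at_def w m by (simp add: nth_append)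
    also have "\<dots> = x @ 0 # (replicate (Suc r) 0)[r := 1]"
      by (simp add: list_update_append)
    also have "\<dots> = (x @ replicate r 0) @ [0,1]"
      by (simp only: rep_upd) (simp add: Cons_rep_app)
    finally show ?thesis .
  qed
  have c: "greedy_cand S ?L (length x) ?m"
    unfolding greedy_cand_def l using hom tr res by auto
  have "greedy_next S ?L = Some (transpose_at (last ?L) (length x) ?m)"
  proof (rule greedy_next_eqI[OF c])
    fix i' j' assume c': "greedy_cand S ?L i' j'"
    show "length x < i' \<or> (length x = i' \<and> ?m \<le> j')"
    proof (cases "i' < ?m \<and> j' < ?m")
      case True
      then have "greedy_cand S' Q i' j'" using cand_prefix[OF Q _ _ nohist mem] c' by blast
      then show ?thesis using greedy_next_NoneD[OF none] by blast
    next
      case False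
      have h': "homog_trans_ok (?u@[0]) i' j'" using c' l by (simp add: greedy_cand_def)
      have e: "i' < ?m" "j' = ?m" "\<forall>p. i' < p \<and> p < ?m \<longrightarrow> ?u!p \<noteq> 1"
        using extra0[OF h' False] by auto
      have u1: "(?u@[0])!i' = 1" using h' by (simp add: homog_trans_ok_def)
      have "\<not> i' < length x" using e m u by (auto simp: nth_append)
      moreover have "\<not> i' > length x"
      proof
        assume "i' > length x"
        then have "(?u@[0])!i' = 0" unfolding w using e m by (auto simp: nth_append)
        then show False using u1 by simp
      qed
      ultimately show ?thesis using e by auto
    qed
  qed
  then show ?thesis using l tr by simp
qed


lemma nohist_nil: "\<forall>h\<in>set ([]::nat list list). \<forall>t. h \<noteq> t@s" by simp

lemma T2a:
  assumes Q: "Q \<noteq> []" and u: "last Q = replicate r 0"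
    and none: "greedy_next S' Q = None"
    and mem: "\<forall>t. t@[0,1] \<in> Fn n k \<longleftrightarrow> t \<in> S'"
    and res: "1 # replicate r 0 @ [0] \<in> Fn n k"
  shows "greedy_next (Fn n k) (map (\<lambda>v. v@[0,1]) Q) = Some (1 # replicate r 0 @ [0])"
proof -
  let ?S = "Fn n k"
  let ?u = "last Q"
  let ?L = "[] @ map (\<lambda>v. v@[0,1]) Q"
  have l: "last ?L = ?u @ [0,1]" using Q by (simp add: last_map)
  have w: "?u @ [0,1] = 0 # replicate r 0 @ [1]" using u by (simp add: Cons_rep_app)
  have hom: "homog_trans_ok (?u@[0,1]) (Suc r) 0"
    unfolding homog_trans_ok_def w by (auto simp: nth_append)
  have tr: "transpose_at (?u@[0,1]) (Suc r) 0 = 1 # replicate r 0 @ [0]"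
    unfolding transpose_at_def w by (simp add: nth_append list_update_append)
  have c: "greedy_cand ?S ?L (Suc r) 0"
    unfolding greedy_cand_def l using hom tr res by auto
  have "greedy_next ?S ?L = Some (transpose_at (last ?L) (Suc r) 0)"
  proof (rule greedy_next_eqI[OF c])
    fix i' j' assume c': "greedy_cand ?S ?L i' j'"
    show "Suc r < i' \<or> (Suc r = i' \<and> 0 \<le> j')"
    proof (cases "i' < length ?u \<and> j' < length ?u")
      case True
      then have "greedy_cand S' Q i' j'" using cand_prefix[OF Q _ _ nohist_nil mem] c' by blast
      then show ?thesis using greedy_next_NoneD[OF none] by blast
    next
      case False
      have "homog_trans_ok (?u@[0,1]) i' j'" "transpose_at (?u@[0,1]) i' j' \<in> ?S"
        using c' l by (auto simp: greedy_cand_def)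
      then have "i' = Suc (length ?u)" using extra01 False by blast
      then show ?thesis using u by simp
    qed
  qed
  then show ?thesis using l tr by simp
qed

lemma T2b:
  assumes Q: "Q \<noteq> []" and u: "last Q = x @ replicate (Suc r) 0"
    and x: "x \<noteq> []" "last x = 1"
    and none: "greedy_next S' Q = None"
    and mem: "\<forall>t. t@[0,1] \<in> Fn n k \<longleftrightarrow> t \<in> S'"
    and res: "x @ [0,1] @ replicate r 0 @ [0] \<in> Fn n k"
  shows "greedy_next (Fn n k) (map (\<lambda>v. v@[0,1]) Q) = Some (x @ [0,1] @ replicate r 0 @ [0])"
proof -
  let ?S = "Fn n k"
  let ?u = "last Q"
  let ?L = "[] @ map (\<lambda>v. v@[0,1]) Q"
  let ?a = "length x"
  have l: "last ?L = ?u @ [0,1]" using Q by (simp add: last_map)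
  have w: "?u @ [0,1] = x @ 0 # 0 # replicate r 0 @ [1]" using u by (simp add: Cons_rep_app)
  have lu: "length ?u = ?a + Suc r" using u by simp
  have hom: "homog_trans_ok (?u@[0,1]) (?a + r + 2) (Suc ?a)"
    unfolding homog_trans_ok_def w by (auto simp: nth_append)
  have tr: "transpose_at (?u@[0,1]) (?a + r + 2) (Suc ?a) = x @ [0,1] @ replicate r 0 @ [0]"
    unfolding transpose_at_def w by (simp add: nth_append list_update_append)
  have c: "greedy_cand ?S ?L (?a + r + 2) (Suc ?a)"
    unfolding greedy_cand_def l using hom tr res by auto
  have xl: "x ! (?a - 1) = 1" using x by (simp add: last_conv_nth)
  have "greedy_next ?S ?L = Some (transpose_at (last ?L) (?a + r + 2) (Suc ?a))"
  proof (rule greedy_next_eqI[OF c])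
    fix i' j' assume c': "greedy_cand ?S ?L i' j'"
    show "?a + r + 2 < i' \<or> (?a + r + 2 = i' \<and> Suc ?a \<le> j')"
    proof (cases "i' < length ?u \<and> j' < length ?u")
      case True
      then have "greedy_cand S' Q i' j'" using cand_prefix[OF Q _ _ nohist_nil mem] c' by blast
      then show ?thesis using greedy_next_NoneD[OF none] by blast
    next
      case False
      have h': "homog_trans_ok (?u@[0,1]) i' j'" and t': "transpose_at (?u@[0,1]) i' j' \<in> ?S"
        using c' l by (auto simp: greedy_cand_def)
      then have i': "i' = ?a + r + 2" using extra01 False lu by fastforce
      have j0: "(?u@[0,1]) ! j' = 0" and jl: "j' < length (?u@[0,1])"
        and btw: "\<forall>p. min i' j' < p \<and> p < max i' j' \<longrightarrow> (?u@[0,1]) ! p \<noteq> 1"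
        using h' by (auto simp: homog_trans_ok_def)
      have "j' \<noteq> i'" using j0 h' by (auto simp: homog_trans_ok_def)
      then have ji: "j' < i'" using jl i' lu by simp
      have xa: "(?u@[0,1]) ! (?a - 1) = 1" unfolding w using xl x by (simp add: nth_append)
      have "\<not> j' < ?a - 1"
      proof
        assume "j' < ?a - 1"
        then show False using btw[rule_format, of "?a - 1"] ji i' xa by auto
      qed
      moreover have "j' \<noteq> ?a - 1" using xa j0 by auto
      moreover have "j' \<noteq> ?a"
      proof
        assume ja: "j' = ?a"
        let ?t = "transpose_at (?u@[0,1]) i' j'"
        have "?t ! (?a - 1) = 1" "?t ! ?a = 1" "length ?t = ?a + r + 3"
          unfolding transpose_at_def w ja i' using xl x
          by (auto simp: nth_append nth_list_update)
        moreover have a1: "Suc (?a - 1) = ?a" using x by (cases x) auto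
        ultimately have "\<not> no11 ?t" unfolding no11_def
        proof -
          assume t1: "?t ! (?a - 1) = 1" and t2: "?t ! ?a = 1" and lt: "length ?t = ?a + r + 3"
          show "\<not> (\<forall>m. Suc m < length ?t \<longrightarrow> \<not> (?t ! m = 1 \<and> ?t ! Suc m = 1))"
          proof
            assume "\<forall>m. Suc m < length ?t \<longrightarrow> \<not> (?t ! m = 1 \<and> ?t ! Suc m = 1)"
            then have "Suc (?a - 1) < length ?t \<longrightarrow> \<not> (?t ! (?a - 1) = 1 \<and> ?t ! Suc (?a - 1) = 1)" by blast
            then show False using t1 t2 lt a1 by simp
          qed
        qed
        then show False using t' by (simp add: Fn_iff)
      qed
      ultimately show ?thesis using i' by auto
    qed
  qed
  then show ?thesis using l tr by simp
qed

lemma Term1: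
  assumes Q: "Q \<noteq> []" and n: "2 \<le> n"
    and none: "greedy_next S' Q = None"
    and mem: "\<forall>t. t@[0,1] \<in> Fn n k \<longleftrightarrow> t \<in> S'"
    and nohist: "\<forall>h\<in>set H. \<forall>t. h \<noteq> t@[0,1]"
    and cover: "\<forall>v \<in> Fn (n-1) k. v@[0] \<in> set H"
  shows "greedy_next (Fn n k) (H @ map (\<lambda>v. v@[0,1]) Q) = None"
proof (rule greedy_next_NoneI)
  fix i j
  show "\<not> greedy_cand (Fn n k) (H @ map (\<lambda>v. v@[0,1]) Q) i j"
  proof
    let ?u = "last Q"
    let ?L = "H @ map (\<lambda>v. v@[0,1]) Q"
    assume c: "greedy_cand (Fn n k) ?L i j"
    have l: "last ?L = ?u @ [0,1]" using Q by (simp add: last_map)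
    show False
    proof (cases "i < length ?u \<and> j < length ?u")
      case True
      then have "greedy_cand S' Q i j" using cand_prefix[OF Q _ _ nohist mem] c by blast
      then show False using greedy_next_NoneD[OF none] by blast
    next
      case False
      let ?t = "transpose_at (?u@[0,1]) i j"
      have h: "homog_trans_ok (?u@[0,1]) i j" and t: "?t \<in> Fn n k" and nv: "?t \<notin> set ?L"
        using c l by (auto simp: greedy_cand_def)
      have i: "i = Suc (length ?u)" using extra01[OF h t False] .
      have "(?u@[0,1]) ! j = 0" "j \<noteq> i" using h by (auto simp: homog_trans_ok_def)
      then have "?t ! Suc (length ?u) = 0" using i by (simp add: transpose_at_def nth_list_update)
      moreover have "n - 1 = Suc (length ?u)" using t by (auto simp: Fn_iff)
      ultimately have "?t ! (n-1) = 0" by simp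
      then obtain v where "?t = v@[0]" "v \<in> Fn (n-1) k" using Fn_last0[OF t] n by auto
      then show False using cover nv by auto
    qed
  qed
qed

lemma Term2:
  assumes Q: "Q \<noteq> []" and n: "2 \<le> n"
    and none: "greedy_next S' Q = None"
    and mem: "\<forall>t. t@[0] \<in> Fn n k \<longleftrightarrow> t \<in> S'"
    and nohist: "\<forall>h\<in>set H. \<forall>t. h \<noteq> t@[0]"
    and cover: "\<forall>v \<in> Fn (n-2) (k-1). v@[0,1] \<in> set H"
  shows "greedy_next (Fn n k) (H @ map (\<lambda>v. v@[0]) Q) = None"
proof (rule greedy_next_NoneI)
  fix i j
  show "\<not> greedy_cand (Fn n k) (H @ map (\<lambda>v. v@[0]) Q) i j"
  proof
    let ?u = "last Q"
    let ?L = "H @ map (\<lambda>v. v@[0]) Q"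
    assume c: "greedy_cand (Fn n k) ?L i j"
    have l: "last ?L = ?u @ [0]" using Q by (simp add: last_map)
    show False
    proof (cases "i < length ?u \<and> j < length ?u")
      case True
      then have "greedy_cand S' Q i j" using cand_prefix[OF Q _ _ nohist mem] c by blast
      then show False using greedy_next_NoneD[OF none] by blast
    next
      case False
      let ?t = "transpose_at (?u@[0]) i j"
      have h: "homog_trans_ok (?u@[0]) i j" and t: "?t \<in> Fn n k" and nv: "?t \<notin> set ?L"
        using c l by (auto simp: greedy_cand_def)
      have e: "i < length ?u" "j = length ?u" using extra0[OF h False] by auto
      have "(?u@[0]) ! i = 1" using h by (auto simp: homog_trans_ok_def)
      then have "?t ! length ?u = 1" using e by (simp add: transpose_at_def nth_list_update)
      moreover have "n - 1 = length ?u" using t by (auto simp: Fn_iff)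
      ultimately have "?t ! (n-1) = 1" by simp
      then obtain v where "?t = v@[0,1]" "v \<in> Fn (n-2) (k-1)" using Fn_last1[OF t n] by auto
      then show False using cover nv by auto
    qed
  qed
qed


lemma grun_final: "grun S L L' \<Longrightarrow> greedy_next S L' = None"
  by (induction rule: grun.induct) auto

lemma suffix_last: "suffix s w \<Longrightarrow> s \<noteq> [] \<Longrightarrow> last s = last w"
  by (auto simp: suffix_def)

lemma sp_concat:
  assumes sp1: "suffix_partitioned P1" and sp2: "suffix_partitioned P2"
    and x: "x1 \<noteq> []" "x2 \<noteq> []" "last x1 \<noteq> last x2"
  shows "suffix_partitioned (map (\<lambda>v. v@x1) P1 @ map (\<lambda>v. v@x2) P2)"
  unfolding suffix_partitioned_def
proof (intro allI impI)
  fix s a b c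
  let ?L = "map (\<lambda>v. v@x1) P1 @ map (\<lambda>v. v@x2) P2"
  let ?l = "length P1"
  assume h: "a \<le> b \<and> b \<le> c \<and> c < length ?L \<and> suffix s (?L ! a) \<and> suffix s (?L ! c)"
  have key: "suffix s (vb@x)"
    if P: "suffix_partitioned P" and abc: "a' \<le> b' \<and> b' \<le> c' \<and> c' < length P"
      and sa: "suffix s (P!a' @ x)" and sc: "suffix s (P!c' @ x)" and vb: "vb = P!b'" for P a' b' c' x vb
  proof -
    from sa have "suffix s x \<or> (\<exists>s'. s = s'@x \<and> suffix s' (P!a'))" by (simp add: suffix_append)
    then show ?thesis
    proof
      assume "suffix s x" then show ?thesis by (simp add: suffix_appendI)
    next
      assume "\<exists>s'. s = s'@x \<and> suffix s' (P!a')"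
      then obtain s' where s': "s = s'@x" "suffix s' (P!a')" by blast
      from sc s' have "suffix s' (P!c')" by (auto simp: suffix_def)
      then have "suffix s' (P!b')" using P abc s' unfolding suffix_partitioned_def by blast
      then show ?thesis using s' vb by (auto simp: suffix_def)
    qed
  qed
  show "suffix s (?L ! b)"
  proof (cases "c < ?l")
    case True
    then show ?thesis using key[OF sp1, of a b c x1 "P1!b"] h by (auto simp: nth_append)
  next
    case False
    show ?thesis
    proof (cases "a < ?l")
      case False
      then have "a - ?l \<le> b - ?l \<and> b - ?l \<le> c - ?l \<and> c - ?l < length P2" using h by auto
      then show ?thesis using key[OF sp2, of "a - ?l" "b - ?l" "c - ?l" x2 "P2!(b - ?l)"] h False by (auto simp: nth_append)
    next
      case True
      have "s = []"
      proof (rule ccontr)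
        assume "s \<noteq> []"
        then have "last s = last (P1!a @ x1)" "last s = last (P2!(c-?l) @ x2)"
          using h True \<open>\<not> c < ?l\<close> suffix_last by (auto simp: nth_append)
        then show False using x by simp
      qed
      then show ?thesis by simp
    qed
  qed
qed

lemma sp_single: "suffix_partitioned [u]"
  unfolding suffix_partitioned_def by auto

lemma compose1:
  assumes n: "2 \<le> n" and k: "0 < k"
    and r1: "grun (Fn (n-1) k) [a1] P1" and cov1: "Fn (n-1) k \<subseteq> set P1" and sp1: "suffix_partitioned P1"
    and r2: "grun (Fn (n-2) (k-1)) [b] P2" and cov2: "Fn (n-2) (k-1) \<subseteq> set P2" and sp2: "suffix_partitioned P2"
    and tr: "greedy_next (Fn n k) (map (\<lambda>v. v@[0]) P1) = Some (b@[0,1])"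
  shows "grun (Fn n k) [a1@[0]] (map (\<lambda>v. v@[0]) P1 @ map (\<lambda>v. v@[0,1]) P2) \<and>
         Fn n k \<subseteq> set (map (\<lambda>v. v@[0]) P1 @ map (\<lambda>v. v@[0,1]) P2) \<and>
         suffix_partitioned (map (\<lambda>v. v@[0]) P1 @ map (\<lambda>v. v@[0,1]) P2) \<and>
         last (map (\<lambda>v. v@[0]) P1 @ map (\<lambda>v. v@[0,1]) P2) = last P2 @ [0,1]"
proof -
  let ?S = "Fn n k"
  let ?H = "map (\<lambda>v. v@[0]) P1"
  let ?L = "?H @ map (\<lambda>v. v@[0,1]) P2"
  have n1: "n = Suc (n-1)" and n2: "n = Suc (Suc (n-2))" using n by auto
  have mem0: "\<forall>t. t@[0] \<in> ?S \<longleftrightarrow> t \<in> Fn (n-1) k" using Fn_snoc0[of _ "n-1" k] n1 by metis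
  have mem01: "\<forall>t. t@[0,1] \<in> ?S \<longleftrightarrow> t \<in> Fn (n-2) (k-1)" using Fn_snoc01[of _ "n-2" k] n2 k by metis
  have P2ne: "P2 \<noteq> []" using grun_prefix[OF r2] by auto
  have nohist2: "\<forall>h\<in>set ?H. \<forall>t. h \<noteq> t@[0,1]" by auto
  have "greedy_next ?S ?L = None"
    using Term1[OF P2ne n grun_final[OF r2] mem01 nohist2] cov1 by auto
  then have g3: "grun ?S ?L ?L" by (rule grun.stop)
  have g2: "grun ?S (?H @ map (\<lambda>v. v@[0,1]) [b]) ?L"
    using sim[OF r2 _ nohist2 mem01 _ g3] lexafter01 by blast
  have g1: "grun ?S ?H ?L" using grun.step[OF tr] g2 by simp
  have g0: "grun ?S ([] @ map (\<lambda>v. v@[0]) [a1]) ?L"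
    using sim[OF r1 _ nohist_nil mem0 _] g1 lexafter0 by auto
  have cov: "?S \<subseteq> set ?L"
  proof
    fix w assume w: "w \<in> ?S"
    from Fn_decomp[OF w n] show "w \<in> set ?L" using cov1 cov2 by auto
  qed
  have sp: "suffix_partitioned ?L" by (rule sp_concat[OF sp1 sp2]) auto
  show ?thesis using g0 cov sp P2ne by (simp add: last_map)
qed

lemma compose2:
  assumes n: "2 \<le> n" and k: "0 < k"
    and r1: "grun (Fn (n-2) (k-1)) [a1] P1" and cov1: "Fn (n-2) (k-1) \<subseteq> set P1" and sp1: "suffix_partitioned P1"
    and r2: "grun (Fn (n-1) k) [b] P2" and cov2: "Fn (n-1) k \<subseteq> set P2" and sp2: "suffix_partitioned P2"
    and tr: "greedy_next (Fn n k) (map (\<lambda>v. v@[0,1]) P1) = Some (b@[0])"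
  shows "grun (Fn n k) [a1@[0,1]] (map (\<lambda>v. v@[0,1]) P1 @ map (\<lambda>v. v@[0]) P2) \<and>
         Fn n k \<subseteq> set (map (\<lambda>v. v@[0,1]) P1 @ map (\<lambda>v. v@[0]) P2) \<and>
         suffix_partitioned (map (\<lambda>v. v@[0,1]) P1 @ map (\<lambda>v. v@[0]) P2) \<and>
         last (map (\<lambda>v. v@[0,1]) P1 @ map (\<lambda>v. v@[0]) P2) = last P2 @ [0]"
proof -
  let ?S = "Fn n k"
  let ?H = "map (\<lambda>v. v@[0,1]) P1"
  let ?L = "?H @ map (\<lambda>v. v@[0]) P2"
  have n1: "n = Suc (n-1)" and n2: "n = Suc (Suc (n-2))" using n by auto
  have mem0: "\<forall>t. t@[0] \<in> ?S \<longleftrightarrow> t \<in> Fn (n-1) k" using Fn_snoc0[of _ "n-1" k] n1 by metis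
  have mem01: "\<forall>t. t@[0,1] \<in> ?S \<longleftrightarrow> t \<in> Fn (n-2) (k-1)" using Fn_snoc01[of _ "n-2" k] n2 k by metis
  have P2ne: "P2 \<noteq> []" using grun_prefix[OF r2] by auto
  have nohist2: "\<forall>h\<in>set ?H. \<forall>t. h \<noteq> t@[0]" by auto
  have "greedy_next ?S ?L = None"
    using Term2[OF P2ne n grun_final[OF r2] mem0 nohist2] cov1 by auto
  then have g3: "grun ?S ?L ?L" by (rule grun.stop)
  have g2: "grun ?S (?H @ map (\<lambda>v. v@[0]) [b]) ?L"
    using sim[OF r2 _ nohist2 mem0 _ g3] lexafter0 by blast
  have g1: "grun ?S ?H ?L" using grun.step[OF tr] g2 by simp
  have g0: "grun ?S ([] @ map (\<lambda>v. v@[0,1]) [a1]) ?L"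
  proof (rule sim[OF r1 _ nohist_nil mem01])
    show "grun ?S ([] @ map (\<lambda>v. v @ [0, 1]) P1) ?L" using g1 by simp
  qed (simp, rule allI, rule lexafter01)
  have cov: "?S \<subseteq> set ?L"
  proof
    fix w assume w: "w \<in> ?S"
    from Fn_decomp[OF w n] show "w \<in> set ?L" using cov1 cov2 by auto
  qed
  have sp: "suffix_partitioned ?L" by (rule sp_concat[OF sp1 sp2]) auto
  show ?thesis using g0 cov sp P2ne by (simp add: last_map)
qed

lemma single_run:
  assumes "S \<subseteq> {u}"
  shows "grun S [u] [u]"
proof (rule grun.stop, rule greedy_next_NoneI)
  fix i j show "\<not> greedy_cand S [u] i j"
    using assms unfolding greedy_cand_def by auto
qed


definition U :: "nat \<Rightarrow> nat \<Rightarrow> nat \<Rightarrow> nat list" where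
  "U n k j = replicate j 0 @ [1] @ D (k-1) @ replicate (n-2*k-j) 0"

lemma alpha_D: "alpha n k i = replicate i 0 @ [1] @ D (k-1) @ replicate (n-2*k+1-i) 0"
  by (simp add: alpha_def D_def)

lemma gamma_D: "gamma n k = replicate (n-2*k) 0 @ D k"
  by (simp add: gamma_def D_def)

lemma rep_snoc: "replicate (Suc m) a = replicate m a @ [a]"
  by (simp add: replicate_append_same)

lemma I1: "i \<le> n - 2*k \<Longrightarrow> alpha n k i = U n k i @ [0]"
proof -
  assume "i \<le> n - 2*k"
  then have "n-2*k+1-i = Suc (n-2*k-i)" by simp
  then show ?thesis by (simp add: alpha_D U_def replicate_append_same)
qed

lemma I2: "2*k < n \<Longrightarrow> i \<le> n-1-2*k \<Longrightarrow> alpha (n-1) k i = U n k i"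
proof -
  assume "2*k < n" "i \<le> n-1-2*k"
  then have "n-1-2*k+1-i = n-2*k-i" by simp
  then show ?thesis by (simp add: alpha_D U_def)
qed

lemma I3: "2*k < n \<Longrightarrow> 1 \<le> k \<Longrightarrow> gamma (n-1) k = U n k (n-2*k)"
proof -
  assume a: "2*k < n" "1 \<le> k"
  then have "n-2*k = Suc (n-1-2*k)" by simp
  moreover have "D k = [0,1] @ D (k-1)" using a D_Suc[of "k-1"] by simp
  ultimately show ?thesis by (simp add: gamma_D U_def replicate_append_same)
qed

lemma I4: "U (2*k) k 0 = [1] @ D (k-1)"
  by (simp add: U_def)

lemma I5: "2 \<le> k \<Longrightarrow> 2*k \<le> n \<Longrightarrow> j \<le> n-2*k \<Longrightarrow>
   U n k j = (replicate j 0 @ [1] @ D (k-2) @ [0]) @ [1] @ replicate (n-2*k-j) 0 \<and>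
   (replicate j 0 @ [1] @ D (k-2) @ [0]) @ replicate (n-2*k-j) 0 = alpha (n-2) (k-1) j"
proof -
  assume a: "2 \<le> k" "2*k \<le> n" "j \<le> n-2*k"
  define k' where "k' = k - 2"
  have k: "k = Suc (Suc k')" using a by (simp add: k'_def)
  have e: "n-2-2*(k-1)+1-j = Suc (n-2*k-j)" using a by simp
  show ?thesis using e unfolding k by (simp add: U_def alpha_D D_Suc')
qed

lemma I5b: "j \<le> n-2 \<Longrightarrow>
   U n 1 j = replicate j 0 @ [1] @ replicate (n-2-j) 0 \<and>
   replicate j 0 @ replicate (n-2-j) 0 = replicate (n-2) (0::nat)"
  by (simp add: U_def replicate_add[symmetric])

lemma I6: "1 \<le> k \<Longrightarrow> 2*k \<le> n \<Longrightarrow> gamma n k = gamma (n-2) (k-1) @ [0,1]"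
proof -
  assume a: "1 \<le> k" "2*k \<le> n"
  have "D k = D (k-1) @ [0,1]" using a D_Suc'[of "k-1"] by simp
  moreover have "n-2-2*(k-1) = n-2*k" using a by simp
  ultimately show ?thesis by (simp add: gamma_D)
qed

lemma I8: "2 \<le> k \<Longrightarrow> 2*k \<le> n \<Longrightarrow> j \<le> n-2*k \<Longrightarrow>
   alpha (n-2) (k-1) j = (replicate j 0 @ [1] @ D (k-2)) @ replicate (Suc (n-2*k-j)) 0 \<and>
   (replicate j 0 @ [1] @ D (k-2)) @ [0,1] @ replicate (n-2*k-j) 0 @ [0] = alpha n k j"
proof -
  assume a: "2 \<le> k" "2*k \<le> n" "j \<le> n-2*k"
  define k' where "k' = k - 2"
  have k: "k = Suc (Suc k')" using a by (simp add: k'_def)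
  have e: "n-2-2*(k-1)+1-j = Suc (n-2*k-j)" using a by simp
  have f: "n-2*k+1-j = Suc (n-2*k-j)" using a by simp
  show ?thesis using e f unfolding k by (simp add: alpha_D D_Suc' replicate_append_same)
qed

lemma I8x: "2 \<le> k \<Longrightarrow> replicate j 0 @ [1] @ D (k-2) \<noteq> [] \<and> last (replicate j 0 @ [1] @ D (k-2)) = 1"
  using D_last[of "k-2"] by (cases "D (k-2) = []") auto

lemma I8b: "2 \<le> n \<Longrightarrow> 1 # replicate (n-2) 0 @ [0] = U n 1 0 @ [0]"
  by (simp add: U_def)

lemma D_count': "count_list (D a) (Suc 0) = a" using D_count[of a] by simp

lemma no11_appZ:
  assumes "no11 x" shows "no11 (x @ replicate m (0::nat))"
proof (cases m)
  case 0 then show ?thesis using assms by simp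
next
  case (Suc m')
  have "no11 (replicate m (0::nat))" by (rule Z_no11)
  moreover have "hd (replicate m (0::nat)) = 0" using Suc by simp
  ultimately show ?thesis using assms by (simp add: no11_append)
qed

lemma no11_Zapp: "no11 x \<Longrightarrow> no11 (replicate m (0::nat) @ x)"
  by (induction m) (auto simp: no11_Cons)

lemma alpha_mem: "1 \<le> k \<Longrightarrow> i + 2*k \<le> n \<Longrightarrow> alpha n k i \<in> Fn n k"
proof -
  assume a: "1 \<le> k" "i + 2*k \<le> n"
  have len: "length (alpha n k i) = n" using a by (simp add: alpha_D)
  have set: "set (alpha n k i) \<subseteq> {0,1}" using D_set[of "k-1"] by (auto simp: alpha_D)
  define k' where "k' = k - 1"
  have k: "k = Suc k'" using a by (simp add: k'_def)
  have cnt: "count_list (alpha n k i) 1 = k" unfolding k by (simp add: alpha_D D_count')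
  have "no11 ([1] @ D (k-1))" using D_no11[of "k-1"] D_hd[of "k-1"] by (auto simp: no11_Cons)
  then have "no11 (([1] @ D (k-1)) @ replicate (n-2*k+1-i) 0)" by (rule no11_appZ)
  then have "no11 (replicate i 0 @ ([1] @ D (k-1)) @ replicate (n-2*k+1-i) 0)" by (rule no11_Zapp)
  then show ?thesis using len set cnt by (simp add: Fn_iff alpha_D)
qed

lemma zero_mem: "replicate m 0 \<in> Fn m 0"
  by (auto simp: Fn_iff Z_no11)


definition Q1 :: "nat \<Rightarrow> nat \<Rightarrow> nat \<Rightarrow> bool" where
  "Q1 n k i \<longleftrightarrow> (\<exists>L. grun (Fn n k) [alpha n k i] L \<and> Fn n k \<subseteq> set L \<and> suffix_partitioned L \<and> last L = gamma n k)"

definition Q2 :: "nat \<Rightarrow> nat \<Rightarrow> bool" where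
  "Q2 n k \<longleftrightarrow> (\<exists>L. grun (Fn n k) [gamma n k] L \<and> Fn n k \<subseteq> set L \<and> suffix_partitioned L \<and>
      last L = (if even k then alpha n k 0 else alpha n k (n - 2*k)))"

lemma tight_set: "1 \<le> k \<Longrightarrow> n = 2*k \<Longrightarrow> Fn (n-1) k \<subseteq> {U n k 0}"
proof -
  assume a: "1 \<le> k" "n = 2*k"
  have e: "n-1 = 2*(k-1)+1" "Suc (k-1) = k" using a by auto
  have "Fn (n-1) k = Fn (2*(k-1)+1) (Suc (k-1))" by (simp only: e)
  moreover have "U n k 0 = [1] @ D (k-1)" using I4[of k] a by simp
  ultimately show ?thesis using Fn_tight[of "k-1"] by simp
qed

lemma mem0_n: "2 \<le> n \<Longrightarrow> \<forall>t. t@[0] \<in> Fn n k \<longleftrightarrow> t \<in> Fn (n-1) k"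
  using Fn_snoc0[of _ "n-1" k] by (metis Suc_diff_1 le_trans one_le_numeral zero_less_iff_neq_zero not_one_le_zero)

lemma mem01_n: "2 \<le> n \<Longrightarrow> 1 \<le> k \<Longrightarrow> \<forall>t. t@[0,1] \<in> Fn n k \<longleftrightarrow> t \<in> Fn (n-2) (k-1)"
proof -
  assume a: "2 \<le> n" "1 \<le> k"
  then have "n = Suc (Suc (n-2))" by simp
  then show ?thesis using Fn_snoc01[of _ "n-2" k] a by (metis less_le_trans zero_less_one)
qed

lemma grun_ne: "grun S [a] L \<Longrightarrow> L \<noteq> []"
  using grun_prefix by fastforce

lemma main: "\<forall>k. 1 \<le> k \<longrightarrow> 2*k \<le> n \<longrightarrow> (\<forall>i. i \<le> n-2*k \<longrightarrow> Q1 n k i) \<and> Q2 n k"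
proof (induction n rule: less_induct)
  case (less n)
  show ?case
  proof (intro allI impI conjI)
    fix k assume k1: "1 \<le> k" and kn: "2*k \<le> n"
    have n2: "2 \<le> n" using k1 kn by simp
    have mem0: "\<forall>t. t@[0] \<in> Fn n k \<longleftrightarrow> t \<in> Fn (n-1) k" using mem0_n[OF n2] .
    have mem01: "\<forall>t. t@[0,1] \<in> Fn n k \<longleftrightarrow> t \<in> Fn (n-2) (k-1)" using mem01_n[OF n2 k1] .
    have IH1: "(\<forall>i. i \<le> (n-1)-2*k \<longrightarrow> Q1 (n-1) k i) \<and> Q2 (n-1) k" if gt: "2*k < n"
      using less.IH[of "n-1"] k1 gt by simp
    have IH2: "(\<forall>i. i \<le> (n-2)-2*(k-1) \<longrightarrow> Q1 (n-2) (k-1) i) \<and> Q2 (n-2) (k-1)" if k2: "2 \<le> k"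
      using less.IH[of "n-2"] k2 kn by simp
    have ph1: "\<exists>P1 j. grun (Fn (n-1) k) [U n k i] P1 \<and> Fn (n-1) k \<subseteq> set P1 \<and> suffix_partitioned P1
                 \<and> j \<le> n-2*k \<and> last P1 = U n k j" if i: "i \<le> n-2*k" for i
    proof (cases "n = 2*k")
      case True
      then have i0: "i = 0" using i by simp
      have sub: "Fn (n-1) k \<subseteq> {U n k 0}" using tight_set[OF k1 True] .
      show ?thesis
        using single_run[OF sub] sub sp_single[of "U n k 0"] i0 by fastforce
    next
      case False
      then have gt: "2*k < n" using kn by simp
      show ?thesis
      proof (cases "i \<le> n-1-2*k")
        case True
        then obtain L where L: "grun (Fn (n-1) k) [alpha (n-1) k i] L" "Fn (n-1) k \<subseteq> set L"
          "suffix_partitioned L" "last L = gamma (n-1) k"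
          using IH1[OF gt] unfolding Q1_def by blast
        have "alpha (n-1) k i = U n k i" using I2[OF gt True] .
        moreover have "gamma (n-1) k = U n k (n-2*k)" using I3[OF gt k1] .
        ultimately show ?thesis using L by (metis order_refl)
      next
        case False
        then have ie: "i = n-2*k" using i gt by simp
        obtain L where L: "grun (Fn (n-1) k) [gamma (n-1) k] L" "Fn (n-1) k \<subseteq> set L"
          "suffix_partitioned L" "last L = (if even k then alpha (n-1) k 0 else alpha (n-1) k (n-1-2*k))"
          using IH1[OF gt] unfolding Q2_def by blast
        have g: "gamma (n-1) k = U n k i" using I3[OF gt k1] ie by simp
        have "\<exists>j. j \<le> n-2*k \<and> last L = U n k j"
        proof (cases "even k")
          case True then show ?thesis using L(4) I2[OF gt, of 0] by auto
        next
          case False then show ?thesis using L(4) I2[OF gt, of "n-1-2*k"]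
            by (intro exI[of _ "n-1-2*k"]) auto
        qed
        then show ?thesis using L g by metis
      qed
    qed
    fix i assume i: "i \<le> n-2*k"
    show "Q1 n k i"
    proof -
      obtain P1 j where p1: "grun (Fn (n-1) k) [U n k i] P1" "Fn (n-1) k \<subseteq> set P1"
        "suffix_partitioned P1" "j \<le> n-2*k" "last P1 = U n k j"
        using ph1[OF i] by blast
      have P1ne: "P1 \<noteq> []" using grun_ne[OF p1(1)] .
      have none1: "greedy_next (Fn (n-1) k) P1 = None" using grun_final[OF p1(1)] .
      have "\<exists>b P2. grun (Fn (n-2) (k-1)) [b] P2 \<and> Fn (n-2) (k-1) \<subseteq> set P2 \<and> suffix_partitioned P2
            \<and> last P2 @ [0,1] = gamma n k \<and> greedy_next (Fn n k) (map (\<lambda>v. v@[0]) P1) = Some (b@[0,1])"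
      proof (cases "k = 1")
        case True
        have jj: "j \<le> n-2" using p1(4) True by simp
        note e = I5b[OF jj]
        have lastP1: "last P1 = replicate j 0 @ [1] @ replicate (n-2-j) 0" using p1(5) e True by simp
        have res: "(replicate j 0 @ replicate (n-2-j) 0) @ [0,1] \<in> Fn n k"
          using mem01 e zero_mem[of "n-2"] True by simp
        have tr: "greedy_next (Fn n k) (map (\<lambda>v. v@[0]) P1) = Some (replicate (n-2) 0 @ [0,1])"
          using T1[OF P1ne lastP1 none1 mem0 res] e by simp
        have sub: "Fn (n-2) (k-1) \<subseteq> {replicate (n-2) 0}" using Fn_zero True by simp
        have g: "replicate (n-2) 0 @ [0,1] = gamma n k"
          using I6[OF k1 kn] True by (simp add: gamma_def)
        show ?thesis using single_run[OF sub] sub sp_single tr g by fastforce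
      next
        case False
        then have k2: "2 \<le> k" using k1 by simp
        note e = I5[OF k2 kn p1(4)]
        have lastP1: "last P1 = (replicate j 0 @ [1] @ D (k-2) @ [0]) @ [1] @ replicate (n-2*k-j) 0"
          using p1(5) e by simp
        have jb: "j \<le> (n-2)-2*(k-1)" using p1(4) k2 by simp
        obtain P2 where P2: "grun (Fn (n-2) (k-1)) [alpha (n-2) (k-1) j] P2" "Fn (n-2) (k-1) \<subseteq> set P2"
          "suffix_partitioned P2" "last P2 = gamma (n-2) (k-1)"
          using IH2[OF k2] jb unfolding Q1_def by blast
        have h1: "1 \<le> k-1" "j + 2*(k-1) \<le> n-2" using k2 p1(4) kn by auto
        have am: "alpha (n-2) (k-1) j \<in> Fn (n-2) (k-1)" using alpha_mem[OF h1] .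
        have res: "(replicate j 0 @ [1] @ D (k-2) @ [0] @ replicate (n-2*k-j) 0) @ [0,1] \<in> Fn n k"
          using mem01 e am by simp
        have tr: "greedy_next (Fn n k) (map (\<lambda>v. v@[0]) P1) = Some (alpha (n-2) (k-1) j @ [0,1])"
          using T1[OF P1ne lastP1 none1 mem0] res e by simp
        have g: "gamma (n-2) (k-1) @ [0,1] = gamma n k" using I6[OF k1 kn] by simp
        show ?thesis using P2 tr g by (intro exI[of _ "alpha (n-2) (k-1) j"] exI[of _ P2]) simp
      qed
      then obtain b P2 where P2: "grun (Fn (n-2) (k-1)) [b] P2" "Fn (n-2) (k-1) \<subseteq> set P2" "suffix_partitioned P2"
          "last P2 @ [0,1] = gamma n k" "greedy_next (Fn n k) (map (\<lambda>v. v@[0]) P1) = Some (b@[0,1])"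
        by blast
      note c = compose1[OF n2 _ p1(1,2,3) P2(1,2,3,5)]
      have "alpha n k i = U n k i @ [0]" using I1[OF i] .
      then show ?thesis unfolding Q1_def using c k1 P2(4) by (metis less_le_trans zero_less_one)
    qed
  next
    fix k assume k1: "1 \<le> k" and kn: "2*k \<le> n"
    have n2: "2 \<le> n" using k1 kn by simp
    have mem0: "\<forall>t. t@[0] \<in> Fn n k \<longleftrightarrow> t \<in> Fn (n-1) k" using mem0_n[OF n2] .
    have mem01: "\<forall>t. t@[0,1] \<in> Fn n k \<longleftrightarrow> t \<in> Fn (n-2) (k-1)" using mem01_n[OF n2 k1] .
    have IH1: "(\<forall>i. i \<le> (n-1)-2*k \<longrightarrow> Q1 (n-1) k i) \<and> Q2 (n-1) k" if gt: "2*k < n"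
      using less.IH[of "n-1"] k1 gt by simp
    have IH2: "(\<forall>i. i \<le> (n-2)-2*(k-1) \<longrightarrow> Q1 (n-2) (k-1) i) \<and> Q2 (n-2) (k-1)" if k2: "2 \<le> k"
      using less.IH[of "n-2"] k2 kn by simp
    define j where "j = (if odd k then 0 else n-2*k)"
    have jb: "j \<le> n-2*k" by (simp add: j_def)
    have "\<exists>a PA. grun (Fn (n-2) (k-1)) [a] PA \<and> Fn (n-2) (k-1) \<subseteq> set PA \<and> suffix_partitioned PA
          \<and> a @ [0,1] = gamma n k \<and> greedy_next (Fn n k) (map (\<lambda>v. v@[0,1]) PA) = Some (U n k j @ [0])"
    proof (cases "k = 1")
      case True
      have sub: "Fn (n-2) (k-1) \<subseteq> {replicate (n-2) 0}" using Fn_zero True by simp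
      note r = single_run[OF sub]
      have eq: "1 # replicate (n-2) 0 @ [0] = alpha n 1 0" using I8b[OF n2] I1[of 0 n 1] n2 by simp
      have am: "1 # replicate (n-2) 0 @ [0] \<in> Fn n k"
        unfolding eq True by (rule alpha_mem) (use n2 in simp_all)
      have tr: "greedy_next (Fn n k) (map (\<lambda>v. v@[0,1]) [replicate (n-2) 0]) = Some (1 # replicate (n-2) 0 @ [0])"
        by (rule T2a[OF _ _ grun_final[OF r] mem01 am]) simp_all
      have j0: "j = 0" using True by (simp add: j_def)
      have g: "replicate (n-2) 0 @ [0,1] = gamma n k"
        using I6[OF k1 kn] True by (simp add: gamma_def)
      show ?thesis using r sub sp_single tr g j0 I8b[OF n2] True by fastforce
    next
      case False
      then have k2: "2 \<le> k" using k1 by simp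
      obtain PA where PA: "grun (Fn (n-2) (k-1)) [gamma (n-2) (k-1)] PA" "Fn (n-2) (k-1) \<subseteq> set PA"
        "suffix_partitioned PA"
        "last PA = (if even (k-1) then alpha (n-2) (k-1) 0 else alpha (n-2) (k-1) (n-2 - 2*(k-1)))"
        using IH2[OF k2] unfolding Q2_def by blast
      have ar: "n - 2 - 2*(k-1) = n - 2*k" using k2 kn by simp
      have lastPA: "last PA = alpha (n-2) (k-1) j"
        using PA(4) k2 unfolding ar by (simp add: j_def)
      note e = I8[OF k2 kn jb]
      note x = I8x[OF k2, of j]
      have am: "alpha n k j \<in> Fn n k" using alpha_mem[OF k1, of j n] jb kn by simp
      have tr: "greedy_next (Fn n k) (map (\<lambda>v. v@[0,1]) PA) = Some (alpha n k j)"
        using T2b[OF grun_ne[OF PA(1)] _ _ _ grun_final[OF PA(1)] mem01, of "replicate j 0 @ [1] @ D (k-2)" "n-2*k-j"]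
          lastPA e x am by simp
      have g: "gamma (n-2) (k-1) @ [0,1] = gamma n k" using I6[OF k1 kn] by simp
      show ?thesis using PA tr g I1[OF jb] by metis
    qed
    then obtain a PA where PA: "grun (Fn (n-2) (k-1)) [a] PA" "Fn (n-2) (k-1) \<subseteq> set PA" "suffix_partitioned PA"
        "a @ [0,1] = gamma n k" "greedy_next (Fn n k) (map (\<lambda>v. v@[0,1]) PA) = Some (U n k j @ [0])"
      by blast
    have "\<exists>PB. grun (Fn (n-1) k) [U n k j] PB \<and> Fn (n-1) k \<subseteq> set PB \<and> suffix_partitioned PB
          \<and> last PB @ [0] = (if even k then alpha n k 0 else alpha n k (n - 2*k))"
    proof (cases "n = 2*k")
      case True
      have j0: "j = 0" using True by (simp add: j_def)
      have sub: "Fn (n-1) k \<subseteq> {U n k 0}" using tight_set[OF k1 True] .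
      have "U n k 0 @ [0] = alpha n k 0" using I1[of 0 n k] by simp
      then show ?thesis using single_run[OF sub] sub sp_single[of "U n k 0"] j0 True by fastforce
    next
      case False
      then have gt: "2*k < n" using kn by simp
      show ?thesis
      proof (cases "odd k")
        case True
        then have j0: "j = 0" by (simp add: j_def)
        obtain L where L: "grun (Fn (n-1) k) [alpha (n-1) k 0] L" "Fn (n-1) k \<subseteq> set L"
          "suffix_partitioned L" "last L = gamma (n-1) k"
          using IH1[OF gt] unfolding Q1_def by blast
        have "alpha (n-1) k 0 = U n k j" using I2[OF gt, of 0] j0 by simp
        moreover have "last L @ [0] = alpha n k (n-2*k)" using L(4) I3[OF gt k1] I1[of "n-2*k" n k] by simp
        ultimately show ?thesis using L True by auto
      next
        case False
        then have jn: "j = n-2*k" by (simp add: j_def)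
        obtain L where L: "grun (Fn (n-1) k) [gamma (n-1) k] L" "Fn (n-1) k \<subseteq> set L"
          "suffix_partitioned L" "last L = (if even k then alpha (n-1) k 0 else alpha (n-1) k (n-1-2*k))"
          using IH1[OF gt] unfolding Q2_def by blast
        have "gamma (n-1) k = U n k j" using I3[OF gt k1] jn by simp
        moreover have "last L @ [0] = alpha n k 0" using L(4) False I2[OF gt, of 0] I1[of 0 n k] by simp
        ultimately show ?thesis using L False by auto
      qed
    qed
    then obtain PB where PB: "grun (Fn (n-1) k) [U n k j] PB" "Fn (n-1) k \<subseteq> set PB" "suffix_partitioned PB"
        "last PB @ [0] = (if even k then alpha n k 0 else alpha n k (n - 2*k))"
      by blast
    note c = compose2[OF n2 _ PA(1,2,3) PB(1,2,3) PA(5)]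
    show "Q2 n k" unfolding Q2_def using c k1 PA(4) PB(4) by (metis less_le_trans zero_less_one)
  qed
qed

theorem theorem2:
  fixes n k :: nat
  assumes "n \<ge> 1" and "k \<ge> 1" and "n \<ge> 2 * k"
  shows "(\<forall>i. i \<le> n - 2 * k \<longrightarrow>
            Fn n k \<subseteq> set (calF n k (alpha n k i)) \<and>
            suffix_partitioned (calF n k (alpha n k i)) \<and>
            last (calF n k (alpha n k i)) = gamma n k)
       \<and> (Fn n k \<subseteq> set (calF n k (gamma n k)) \<and>
          suffix_partitioned (calF n k (gamma n k)) \<and>
          last (calF n k (gamma n k)) =
            (if even k then alpha n k 0 else alpha n k (n - 2 * k)))"
proof -
  have m: "(\<forall>i. i \<le> n-2*k \<longrightarrow> Q1 n k i) \<and> Q2 n k" using main[of n] assms by blast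
  show ?thesis
  proof (intro conjI allI impI)
    fix i assume "i \<le> n - 2*k"
    then obtain L where L: "grun (Fn n k) [alpha n k i] L" "Fn n k \<subseteq> set L" "suffix_partitioned L" "last L = gamma n k"
      using m unfolding Q1_def by blast
    have "calF n k (alpha n k i) = L" unfolding calF_def using grun_greedy[OF L(1) finite_Fn] .
    then show "Fn n k \<subseteq> set (calF n k (alpha n k i))" "suffix_partitioned (calF n k (alpha n k i))"
      "last (calF n k (alpha n k i)) = gamma n k" using L by simp_all
  next
    obtain L where L: "grun (Fn n k) [gamma n k] L" "Fn n k \<subseteq> set L" "suffix_partitioned L"
      "last L = (if even k then alpha n k 0 else alpha n k (n - 2*k))"
      using m unfolding Q2_def by blast
    have "calF n k (gamma n k) = L" unfolding calF_def using grun_greedy[OF L(1) finite_Fn] .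
    then show "Fn n k \<subseteq> set (calF n k (gamma n k))" "suffix_partitioned (calF n k (gamma n k))"
      "last (calF n k (gamma n k)) = (if even k then alpha n k 0 else alpha n k (n - 2 * k))" using L by simp_all
  qed
qed

end
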